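(* For every integer $\ell\ge 1$, the graph $H_\ell$ is $3$-regular, planar, $2$-edge-connected, and has $2^{\ell+1}+2^\ell-2$ vertices.
   Context: For an integer $\ell\ge 1$, $H_\ell$ is the graph with vertex set $V_\ell=\{v_{h,j} : h\in\{-\ell,\dots,\ell\},\ j\in\{1,\dots,2^{\ell-|h|}\}\}$ and with the following edges: (1) $v_{h,j}v_{h-1,2j-1}$ and $v_{h,j}v_{h-1,2j}$ for every $h\in\{1,\dots,\ell\}$ and $j\in\{1,\dots,2^{\ell-h}\}$; (2) $v_{h,j}v_{h+1,2j-1}$ and $v_{h,j}v_{h+1,2j}$ for every $h\in\{-\ell,\dots,-1\}$ and $j\in\{1,\dots,2^{\ell-|h|}\}$; (3) the edge $v_{\ell,1}v_{-\ell,1}$; (4) the edges $v_{0,2j-1}v_{0,2j}$ for every $j\in\{1,\dots,2^{\ell-1}\}$. *)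

theory Defs
  imports "HOL-Analysis.Analysis"
begin

text \<open>Finite simple graphs are given by a vertex set V and an edge set E of
  two-element subsets of V.  Vertex v_{h,j} of H_l is the pair (h, j).\<close>

type_synonym hvert = "int \<times> nat"

definition H_verts :: "nat \<Rightarrow> hvert set" where
  "H_verts l = {(h, j). - int l \<le> h \<and> h \<le> int l \<and> 1 \<le> j \<and> j \<le> 2 ^ nat (int l - \<bar>h\<bar>)}"

definition H_edges :: "nat \<Rightarrow> hvert set set" where
  "H_edges l =
     {{(h, j), (h - 1, 2 * j - 1)} | h j. 1 \<le> h \<and> h \<le> int l \<and> 1 \<le> j \<and> j \<le> 2 ^ nat (int l - h)}
   \<union> {{(h, j), (h - 1, 2 * j)} | h j. 1 \<le> h \<and> h \<le> int l \<and> 1 \<le> j \<and> j \<le> 2 ^ nat (int l - h)}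
   \<union> {{(h, j), (h + 1, 2 * j - 1)} | h j. - int l \<le> h \<and> h \<le> -1 \<and> 1 \<le> j \<and> j \<le> 2 ^ nat (int l - \<bar>h\<bar>)}
   \<union> {{(h, j), (h + 1, 2 * j)} | h j. - int l \<le> h \<and> h \<le> -1 \<and> 1 \<le> j \<and> j \<le> 2 ^ nat (int l - \<bar>h\<bar>)}
   \<union> {{(int l, 1), (- int l, 1)}}
   \<union> {{(0, 2 * j - 1), (0, 2 * j)} | j. 1 \<le> j \<and> j \<le> 2 ^ (l - 1)}"

definition degree :: "'a set set \<Rightarrow> 'a \<Rightarrow> nat" where
  "degree E v = card {e \<in> E. v \<in> e}"

definition regular :: "nat \<Rightarrow> 'a set \<Rightarrow> 'a set set \<Rightarrow> bool" where
  "regular k V E \<longleftrightarrow> (\<forall>v\<in>V. degree E v = k)"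

definition adj_rel :: "'a set set \<Rightarrow> ('a \<times> 'a) set" where
  "adj_rel E = {(u, v). {u, v} \<in> E \<and> u \<noteq> v}"

definition connected_graph :: "'a set \<Rightarrow> 'a set set \<Rightarrow> bool" where
  "connected_graph V E \<longleftrightarrow> V \<noteq> {} \<and> (\<forall>u\<in>V. \<forall>v\<in>V. (u, v) \<in> (adj_rel E)\<^sup>*)"

definition k_edge_connected :: "nat \<Rightarrow> 'a set \<Rightarrow> 'a set set \<Rightarrow> bool" where
  "k_edge_connected k V E \<longleftrightarrow> card V \<ge> 2 \<and>
     (\<forall>F. F \<subseteq> E \<and> card F < k \<longrightarrow> connected_graph V (E - F))"

definition planar :: "'a set \<Rightarrow> 'a set set \<Rightarrow> bool" where
  "planar V E \<longleftrightarrow> (\<exists>(p :: 'a \<Rightarrow> complex) (\<gamma> :: 'a set \<Rightarrow> real \<Rightarrow> complex).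
     inj_on p V \<and>
     (\<forall>e\<in>E. \<exists>u v. e = {u, v} \<and> u \<noteq> v \<and> arc (\<gamma> e) \<and>
        pathstart (\<gamma> e) = p u \<and> pathfinish (\<gamma> e) = p v \<and>
        path_image (\<gamma> e) \<inter> p ` V = {p u, p v}) \<and>
     (\<forall>e\<in>E. \<forall>e'\<in>E. e \<noteq> e' \<longrightarrow> path_image (\<gamma> e) \<inter> path_image (\<gamma> e') \<subseteq> p ` (e \<inter> e')))"

end

theory Submission
  imports Defs
begin

lemma seg_param:
  fixes a b z :: complex
  assumes "z \<in> closed_segment a b"
  shows "\<exists>u. 0 \<le> u \<and> u \<le> 1 \<and> Re z = (1-u)*Re a + u*Re b \<and> Im z = (1-u)*Im a + u*Im b
     \<and> (u = 0 \<longrightarrow> z = a) \<and> (u = 1 \<longrightarrow> z = b)"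
  using assms unfolding closed_segment_def by auto

lemma strip_pt:
  fixes a b z :: complex
  assumes "z \<in> closed_segment a b" "Im b = Im a + 1"
  shows "Im a \<le> Im z \<and> Im z \<le> Im a + 1 \<and> (Im z = Im a \<longrightarrow> z = a) \<and> (Im z = Im a + 1 \<longrightarrow> z = b)"
proof -
  obtain u where u: "0 \<le> u" "u \<le> 1" "Im z = (1-u)*Im a + u*Im b"
     "u = 0 \<longrightarrow> z = a" "u = 1 \<longrightarrow> z = b"
    using seg_param[OF assms(1)] by blast
  have "Im z = Im a + u" using u(3) assms(2) by (simp add: algebra_simps)
  then show ?thesis using u by auto
qed

lemma re_minus1:
  fixes a b z :: complex
  assumes "z \<in> closed_segment a b" "Re a \<ge> -1" "Re b \<ge> 1" "Re z = -1"
  shows "z = a"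
proof -
  obtain u where u: "0 \<le> u" "u \<le> 1" "Re z = (1-u)*Re a + u*Re b"
     "u = 0 \<longrightarrow> z = a"
    using seg_param[OF assms(1)] by blast
  have "(1-u)*Re a \<ge> (1-u)*(-1)" using u assms by (intro mult_left_mono) auto
  moreover have "u * Re b \<ge> u * 1" using u assms by (intro mult_left_mono) auto
  ultimately have "u \<le> 0" using u(3) assms(4) by (simp add: algebra_simps)
  then show ?thesis using u by auto
qed

lemma re_range:
  fixes a b z :: complex
  assumes "z \<in> closed_segment a b" "Re a \<le> Re b"
  shows "Re a \<le> Re z \<and> Re z \<le> Re b"
proof -
  obtain u where u: "0 \<le> u" "u \<le> 1" "Re z = (1-u)*Re a + u*Re b"
    using seg_param[OF assms(1)] by blast
  have "Re z = Re a + u * (Re b - Re a)" using u(3) by (simp add: algebra_simps)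
  moreover have "u * (Re b - Re a) \<ge> 0" using u assms by simp
  moreover have "u * (Re b - Re a) \<le> 1 * (Re b - Re a)" using u assms by (intro mult_right_mono) auto
  ultimately show ?thesis by auto
qed

lemma im_const:
  fixes a b z :: complex
  assumes "z \<in> closed_segment a b" "Im a = c" "Im b = c"
  shows "Im z = c"
proof -
  obtain u where u: "Im z = (1-u)*Im a + u*Im b"
    using seg_param[OF assms(1)] by blast
  then show ?thesis using assms by (simp add: algebra_simps)
qed

lemma re_const:
  fixes a b z :: complex
  assumes "z \<in> closed_segment a b" "Re a = c" "Re b = c"
  shows "Re z = c"
proof -
  obtain u where u: "Re z = (1-u)*Re a + u*Re b"
    using seg_param[OF assms(1)] by blast
  then show ?thesis using assms by (simp add: algebra_simps)
qed

lemma same_strip: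
  fixes a b a' b' z :: complex
  assumes "z \<in> closed_segment a b" "z \<in> closed_segment a' b'"
    "Im a' = Im a" "Im b = Im a + 1" "Im b' = Im a + 1"
    "Re a \<le> Re a'" "Re b \<le> Re b'" "Re a < Re a' \<or> Re b < Re b'"
  shows "z = a \<or> z = b"
proof -
  obtain u where u: "0 \<le> u" "u \<le> 1" "Re z = (1-u)*Re a + u*Re b" "Im z = (1-u)*Im a + u*Im b"
     "u = 0 \<longrightarrow> z = a" "u = 1 \<longrightarrow> z = b"
    using seg_param[OF assms(1)] by blast
  obtain v where v: "0 \<le> v" "v \<le> 1" "Re z = (1-v)*Re a' + v * Re b'" "Im z = (1-v)*Im a' + v * Im b'"
    using seg_param[OF assms(2)] by blast
  have "Im z = Im a + u" using u(4) assms by (simp add: algebra_simps)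
  moreover have "Im z = Im a + v" using v(4) assms by (simp add: algebra_simps)
  ultimately have uv: "u = v" by simp
  have eq: "(1-u)*(Re a' - Re a) + u*(Re b' - Re b) = 0"
    using u(3) v(3) uv by (simp add: algebra_simps)
  have t1: "(1-u)*(Re a' - Re a) \<ge> 0" using u assms by simp
  have t2: "u*(Re b' - Re b) \<ge> 0" using u assms by simp
  have z1: "(1-u)*(Re a' - Re a) = 0" and z2: "u*(Re b' - Re b) = 0" using eq t1 t2 by linarith+
  from assms(8) show ?thesis
  proof
    assume "Re a < Re a'" then have "u = 1" using z1 by simp
    then show ?thesis using u by auto
  next
    assume "Re b < Re b'" then have "u = 0" using z2 by simp
    then show ?thesis using u by auto
  qed
qed

lemma seg_doubleton:
  assumes "{u,v} = {a,b}"
  shows "closed_segment (p u) (p v) = closed_segment (p a) (p b)"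
  using assms by (auto simp: doubleton_eq_iff closed_segment_commute)

lemma planar_straight:
  fixes p :: "'a \<Rightarrow> complex"
  assumes inj: "inj_on p V"
    and ed: "\<And>e. e \<in> E \<Longrightarrow> \<exists>u v. e = {u,v} \<and> u \<noteq> v \<and> u \<in> V \<and> v \<in> V"
    and vx: "\<And>e u v. e \<in> E \<Longrightarrow> e = {u,v} \<Longrightarrow> closed_segment (p u) (p v) \<inter> p ` V \<subseteq> {p u, p v}"
    and cr: "\<And>e e' u v u' v' z. e \<in> E \<Longrightarrow> e' \<in> E \<Longrightarrow> e \<noteq> e' \<Longrightarrow> e = {u,v} \<Longrightarrow> e' = {u',v'} \<Longrightarrow>
       z \<in> closed_segment (p u) (p v) \<Longrightarrow> z \<in> closed_segment (p u') (p v') \<Longrightarrow> z \<in> p ` V"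
  shows "planar V E"
proof -
  define fa where "fa e = (SOME a. a \<in> e)" for e :: "'a set"
  define fb where "fb e = (SOME b. b \<in> e \<and> b \<noteq> fa e)" for e :: "'a set"
  define g where "g e = linepath (p (fa e)) (p (fb e))" for e
  have dec: "e = {fa e, fb e} \<and> fa e \<noteq> fb e \<and> fa e \<in> V \<and> fb e \<in> V" if eE: "e \<in> E" for e
  proof -
    obtain u v where uv: "e = {u,v}" "u \<noteq> v" "u \<in> V" "v \<in> V" using ed[OF eE] by blast
    have a: "fa e \<in> e" unfolding fa_def using uv by (metis insertI1 someI)
    have "\<exists>b. b \<in> e \<and> b \<noteq> fa e" using uv a by auto
    then have b: "fb e \<in> e \<and> fb e \<noteq> fa e" unfolding fb_def by (rule someI_ex)
    show ?thesis using a b uv by auto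
  qed
  have img: "path_image (g e) = closed_segment (p (fa e)) (p (fb e))" for e
    by (simp add: g_def)
  show ?thesis unfolding planar_def
  proof (rule exI[of _ p], rule exI[of _ g], intro conjI ballI impI)
    show "inj_on p V" by fact
  next
    fix e assume e: "e \<in> E"
    note d = dec[OF e]
    have ne: "p (fa e) \<noteq> p (fb e)" using d inj by (meson inj_on_def)
    have "closed_segment (p (fa e)) (p (fb e)) \<inter> p ` V = {p (fa e), p (fb e)}"
      using vx[OF e, of "fa e" "fb e"] d by auto
    then show "\<exists>u v. e = {u, v} \<and> u \<noteq> v \<and> arc (g e) \<and> pathstart (g e) = p u \<and>
       pathfinish (g e) = p v \<and> path_image (g e) \<inter> p ` V = {p u, p v}"
      using d ne by (intro exI[of _ "fa e"] exI[of _ "fb e"]) (auto simp: g_def arc_linepath)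
  next
    fix e e' assume e: "e \<in> E" and e': "e' \<in> E" and ne: "e \<noteq> e'"
    note d = dec[OF e] and d' = dec[OF e']
    show "path_image (g e) \<inter> path_image (g e') \<subseteq> p ` (e \<inter> e')"
    proof
      fix z assume z: "z \<in> path_image (g e) \<inter> path_image (g e')"
      have zV: "z \<in> p ` V" using cr[OF e e' ne, of "fa e" "fb e" "fa e'" "fb e'" z] d d' z img by auto
      have z1: "z \<in> {p (fa e), p (fb e)}" using vx[OF e, of "fa e" "fb e"] d z zV img by auto
      have z2: "z \<in> {p (fa e'), p (fb e')}" using vx[OF e', of "fa e'" "fb e'"] d' z zV img by auto
      obtain x where x: "x \<in> e" "z = p x" using z1 d by auto
      obtain y where y: "y \<in> e'" "z = p y" using z2 d' by auto
      have "x \<in> V" "y \<in> V" using x(1) y(1) d d' by (metis empty_iff insert_iff)+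
      then have "x = y" using inj x y by (metis inj_on_def)
      then show "z \<in> p ` (e \<inter> e')" using x y by auto
    qed
  qed
qed

definition TEp :: "nat \<Rightarrow> int \<Rightarrow> nat \<Rightarrow> nat \<Rightarrow> bool" where
  "TEp l h j c \<longleftrightarrow> (1 \<le> h \<and> h \<le> int l \<and> 1 \<le> j \<and> j \<le> 2 ^ nat (int l - h)) \<and> (c = 2*j-1 \<or> c = 2*j)"
definition BEp :: "nat \<Rightarrow> int \<Rightarrow> nat \<Rightarrow> nat \<Rightarrow> bool" where
  "BEp l h j c \<longleftrightarrow> (- int l \<le> h \<and> h \<le> -1 \<and> 1 \<le> j \<and> j \<le> 2 ^ nat (int l - \<bar>h\<bar>)) \<and> (c = 2*j-1 \<or> c = 2*j)"
definition PEp :: "nat \<Rightarrow> nat \<Rightarrow> bool" where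
  "PEp l j \<longleftrightarrow> 1 \<le> j \<and> j \<le> 2 ^ (l - 1)"

lemma union2_gen: "{f h j (g1 j) | h j. P h j} \<union> {f h j (g2 j) | h j. P h j} =
   {f h j c | h j c. P h j \<and> (c = g1 j \<or> c = g2 j)}"
  by blast

lemma H_edges_alt: "H_edges l = ({{(h,j),(h-1,c)} | h j c. TEp l h j c}
     \<union> {{(h,j),(h+1,c)} | h j c. BEp l h j c})
     \<union> {{(int l, 1), (- int l, 1)}}
     \<union> {{(0, 2 * j - 1), (0, 2 * j)} | j. PEp l j}"
  unfolding H_edges_def TEp_def BEp_def PEp_def
  apply (subst union2_gen[symmetric, where f="\<lambda>h j c. {(h,j),(h-1,c)}"])
  apply (subst union2_gen[symmetric, where f="\<lambda>h j c. {(h,j),(h+1,c)}"])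
  by (simp only: Un_assoc)

lemma edge_iff: "e \<in> H_edges l \<longleftrightarrow>
   (\<exists>h j c. e = {(h,j),(h-1,c)} \<and> TEp l h j c) \<or>
   (\<exists>h j c. e = {(h,j),(h+1,c)} \<and> BEp l h j c) \<or>
   e = {(int l,1),(- int l,1)} \<or>
   (\<exists>j. e = {(0,2*j-1),(0,2*j)} \<and> PEp l j)"
  unfolding H_edges_alt
  by (simp only: Un_iff mem_Collect_eq singleton_iff disj_assoc)

lemma vert_iff[simp]: "(h,j) \<in> H_verts l \<longleftrightarrow> - int l \<le> h \<and> h \<le> int l \<and> 1 \<le> j \<and> j \<le> 2 ^ nat (int l - \<bar>h\<bar>)"
  unfolding H_verts_def by simp

lemma pow_nat_succ: "d \<ge> 0 \<Longrightarrow> (2::nat) ^ nat (d + 1) = 2 * 2 ^ nat d"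
  by (simp add: nat_add_distrib)

lemma TE_verts: assumes "TEp l h j c" shows "(h,j) \<in> H_verts l" "(h-1,c) \<in> H_verts l"
proof -
  have h: "1 \<le> h" "h \<le> int l" "1 \<le> j" "j \<le> 2 ^ nat (int l - h)" "c = 2*j-1 \<or> c = 2*j"
    using assms unfolding TEp_def by auto
  have a: "\<bar>h\<bar> = h" "\<bar>h-1\<bar> = h - 1" using h by auto
  have p: "(2::nat) ^ nat (int l - (h-1)) = 2 * 2 ^ nat (int l - h)"
    using pow_nat_succ[of "int l - h"] h by (simp add: algebra_simps)
  show "(h,j) \<in> H_verts l" using h a by simp
  have "c \<le> 2 * 2 ^ nat (int l - h)" "1 \<le> c" using h by auto
  then show "(h-1,c) \<in> H_verts l" using h a p by simp
qed

lemma BE_verts: assumes "BEp l h j c" shows "(h,j) \<in> H_verts l" "(h+1,c) \<in> H_verts l"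
proof -
  have h: "- int l \<le> h" "h \<le> -1" "1 \<le> j" "j \<le> 2 ^ nat (int l - \<bar>h\<bar>)" "c = 2*j-1 \<or> c = 2*j"
    using assms unfolding BEp_def by auto
  have a: "\<bar>h\<bar> = -h" "\<bar>h+1\<bar> = -h - 1" using h by auto
  have p: "(2::nat) ^ nat (int l - \<bar>h+1\<bar>) = 2 * 2 ^ nat (int l - \<bar>h\<bar>)"
    using pow_nat_succ[of "int l + h"] h a by (simp add: algebra_simps)
  show "(h,j) \<in> H_verts l" using h a by simp
  have "c \<le> 2 * 2 ^ nat (int l - \<bar>h\<bar>)" "1 \<le> c" using h by auto
  then show "(h+1,c) \<in> H_verts l" using h a p by simp
qed

lemma pow_l1: "l \<ge> 1 \<Longrightarrow> (2::nat) ^ l = 2 * 2 ^ (l - 1)"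
  by (cases l) auto

lemma PE_verts: assumes "PEp l j" "l \<ge> 1" shows "(0,2*j-1) \<in> H_verts l" "(0,2*j) \<in> H_verts l"
proof -
  have j: "1 \<le> j" "j \<le> 2 ^ (l - 1)" using assms(1) unfolding PEp_def by auto
  have "2*j \<le> 2 ^ l" "1 \<le> 2*j-1" "2*j-1 \<le> 2^l" using pow_l1[OF assms(2)] j by auto
  then show "(0,2*j-1) \<in> H_verts l" "(0,2*j) \<in> H_verts l" using j by auto
qed

lemma root_verts: "(int l, 1) \<in> H_verts l" "(- int l, 1) \<in> H_verts l" by auto

definition X :: "nat \<Rightarrow> int \<Rightarrow> nat \<Rightarrow> real" where
  "X l h j = (if nat \<bar>h\<bar> = l then -1 else (2 * real j - 1) * 2 ^ nat \<bar>h\<bar>)"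

definition pt :: "nat \<Rightarrow> hvert \<Rightarrow> complex" where
  "pt l v = Complex (X l (fst v) (snd v)) (of_int (fst v))"

lemma pt_Re[simp]: "Re (pt l (h,j)) = X l h j" and pt_Im[simp]: "Im (pt l (h,j)) = of_int h"
  by (simp_all add: pt_def)

lemma X_ge1: assumes "j \<ge> 1" "nat \<bar>h\<bar> \<noteq> l" shows "X l h j \<ge> 1"
proof -
  have "(2 * real j - 1) \<ge> 1" using assms by simp
  moreover have "(2::real) ^ nat \<bar>h\<bar> \<ge> 1" by simp
  ultimately have "(2 * real j - 1) * 2 ^ nat \<bar>h\<bar> \<ge> 1 * 1" by (intro mult_mono) auto
  then show ?thesis using assms by (simp add: X_def)
qed

lemma X_ge: assumes "j \<ge> 1" shows "X l h j \<ge> -1"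
  using X_ge1[OF assms, of h l] by (cases "nat \<bar>h\<bar> = l") (auto simp: X_def)

lemma X_mono: assumes "j \<le> j'" shows "X l h j \<le> X l h j'"
  using assms by (auto simp: X_def intro!: mult_right_mono)

lemma X_smono: assumes "j < j'" "nat \<bar>h\<bar> \<noteq> l" shows "X l h j < X l h j'"
  using assms by (auto simp: X_def intro!: mult_strict_right_mono)

lemma X_root: assumes "(h,j) \<in> H_verts l" "X l h j = -1" shows "(h,j) = (int l, 1) \<or> (h,j) = (- int l, 1)"
proof -
  have "nat \<bar>h\<bar> = l" using X_ge1[of j h l] assms by auto
  then have "j \<le> 1" "j \<ge> 1" "h = int l \<or> h = - int l" using assms by auto
  then show ?thesis by auto
qed

lemma pt_inj: "inj_on (pt l) (H_verts l)"
proof (rule inj_onI)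
  fix v w assume v: "v \<in> H_verts l" and w: "w \<in> H_verts l" and e: "pt l v = pt l w"
  obtain h j where hj: "v = (h,j)" by force
  obtain h' j' where hj': "w = (h',j')" by force
  have "h = h'" using arg_cong[OF e, of Im] hj hj' by simp
  moreover have x: "X l h j = X l h j'" using arg_cong[OF e, of Re] hj hj' \<open>h = h'\<close> by simp
  have "j = j'"
  proof (cases "nat \<bar>h\<bar> = l")
    case True then show ?thesis using v w hj hj' \<open>h = h'\<close> by auto
  next
    case False
    show ?thesis
    proof (rule ccontr)
      assume "j \<noteq> j'"
      then have "j < j' \<or> j' < j" by auto
      then show False using X_smono[OF _ False, of j j'] X_smono[OF _ False, of j' j] x by auto
    qed
  qed
  ultimately show "v = w" using hj hj' by simp
qed

lemma strip_vx:
  fixes a b w :: complex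
  assumes "w \<in> closed_segment a b" "Im b = Im a + 1" "Im a = of_int k" "Im w = of_int m"
  shows "w = a \<or> w = b"
proof -
  have s: "Im a \<le> Im w \<and> Im w \<le> Im a + 1 \<and> (Im w = Im a \<longrightarrow> w = a) \<and> (Im w = Im a + 1 \<longrightarrow> w = b)"
    using strip_pt[OF assms(1,2)] .
  then have "of_int k \<le> (of_int m :: real)" "(of_int m :: real) \<le> of_int k + 1" using assms by auto
  then have "k \<le> m" "m \<le> k + 1" by linarith+
  then have "m = k \<or> m = k + 1" by auto
  then show ?thesis using s assms by auto
qed

definition SP :: "nat \<Rightarrow> complex \<Rightarrow> int \<Rightarrow> bool" where
  "SP l z a \<longleftrightarrow> of_int a \<le> Im z \<and> Im z \<le> of_int a + 1 \<and>
     ((Im z = of_int a \<or> Im z = of_int a + 1 \<or> Re z = -1) \<longrightarrow> z \<in> pt l ` H_verts l)"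

lemma strip_SP:
  assumes "z \<in> closed_segment (pt l L) (pt l U)" "L \<in> H_verts l" "U \<in> H_verts l"
    "Im (pt l L) = of_int k" "Im (pt l U) = Im (pt l L) + 1"
    "Re (pt l L) \<ge> -1" "Re (pt l U) \<ge> -1" "Re (pt l L) \<ge> 1 \<or> Re (pt l U) \<ge> 1"
  shows "SP l z k"
proof -
  have s: "Im (pt l L) \<le> Im z \<and> Im z \<le> Im (pt l L) + 1 \<and> (Im z = Im (pt l L) \<longrightarrow> z = pt l L) \<and> (Im z = Im (pt l L) + 1 \<longrightarrow> z = pt l U)"
    using strip_pt[OF assms(1,5)] .
  have r: "z = pt l L \<or> z = pt l U" if "Re z = -1"
  proof (cases "Re (pt l U) \<ge> 1")
    case True then show ?thesis using re_minus1[OF assms(1) assms(6) True that] by simp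
  next
    case False
    then have "Re (pt l L) \<ge> 1" using assms(8) by simp
    moreover have "z \<in> closed_segment (pt l U) (pt l L)" using assms(1) by (simp add: closed_segment_commute)
    ultimately show ?thesis using re_minus1[of z "pt l U" "pt l L"] assms(7) that by simp
  qed
  show ?thesis unfolding SP_def using s r assms by auto
qed

lemma TE_SP: assumes "TEp l h j c" "z \<in> closed_segment (pt l (h,j)) (pt l (h-1,c))"
  shows "SP l z (h-1)"
proof -
  have h: "1 \<le> h" "h \<le> int l" "1 \<le> j" "c = 2*j-1 \<or> c = 2*j"
    using assms unfolding TEp_def by auto
  have c1: "c \<ge> 1" using h by auto
  have nr: "nat \<bar>h-1\<bar> \<noteq> l" using h by auto
  show ?thesis
    apply (rule strip_SP[where L="(h-1,c)" and U="(h,j)"])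
    using assms(2) TE_verts[OF assms(1)] X_ge1[OF c1 nr] X_ge[OF c1] X_ge[OF h(3)]
    by (auto simp: closed_segment_commute)
qed

lemma BE_SP: assumes "BEp l h j c" "z \<in> closed_segment (pt l (h,j)) (pt l (h+1,c))"
  shows "SP l z h"
proof -
  have h: "- int l \<le> h" "h \<le> -1" "1 \<le> j" "c = 2*j-1 \<or> c = 2*j"
    using assms unfolding BEp_def by auto
  have c1: "c \<ge> 1" using h by auto
  have nr: "nat \<bar>h+1\<bar> \<noteq> l" using h by auto
  show ?thesis
    apply (rule strip_SP[where L="(h,j)" and U="(h+1,c)"])
    using assms(2) BE_verts[OF assms(1)] X_ge1[OF c1 nr] X_ge[OF c1] X_ge[OF h(3)]
    by auto
qed

lemma SP_SP: assumes "SP l z a" "SP l z b" "a \<noteq> b" shows "z \<in> pt l ` H_verts l"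
proof (cases "a < b")
  case True
  then have "of_int b \<ge> (of_int a + 1 :: real)" by linarith
  then show ?thesis using assms unfolding SP_def by auto
next
  case False
  then have "of_int a \<ge> (of_int b + 1 :: real)" using assms(3) by linarith
  then show ?thesis using assms unfolding SP_def by auto
qed

lemma SP_int: assumes "SP l z a" "Im z = of_int m" shows "z \<in> pt l ` H_verts l"
proof -
  have "of_int a \<le> (of_int m :: real)" "(of_int m :: real) \<le> of_int a + 1" using assms unfolding SP_def by auto
  then have "a \<le> m" "m \<le> a + 1" by linarith+
  then have "m = a \<or> m = a + 1" by auto
  then show ?thesis using assms unfolding SP_def by auto
qed

lemma SP_re: assumes "SP l z a" "Re z = -1" shows "z \<in> pt l ` H_verts l"
  using assms unfolding SP_def by auto

lemma X0: "l \<ge> 1 \<Longrightarrow> X l 0 k = 2 * real k - 1"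
  by (simp add: X_def)

lemma PE_info: assumes "PEp l j" "l \<ge> 1" "z \<in> closed_segment (pt l (0,2*j-1)) (pt l (0,2*j))"
  shows "Im z = 0 \<and> 4 * real j - 3 \<le> Re z \<and> Re z \<le> 4 * real j - 1"
proof -
  have j: "j \<ge> 1" using assms unfolding PEp_def by auto
  have r1: "Re (pt l (0,2*j-1)) = 4 * real j - 3" using j X0[OF assms(2)] by (simp add: of_nat_diff)
  have r2: "Re (pt l (0,2*j)) = 4 * real j - 1" using j X0[OF assms(2)] by simp
  have "Im z = 0" using im_const[OF assms(3)] by simp
  moreover have "Re (pt l (0,2*j-1)) \<le> Re z \<and> Re z \<le> Re (pt l (0,2*j))"
    using re_range[OF assms(3)] r1 r2 by simp
  ultimately show ?thesis using r1 r2 by simp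
qed

lemma root_info: assumes "z \<in> closed_segment (pt l (int l,1)) (pt l (- int l,1))" shows "Re z = -1"
  using re_const[OF assms] by (simp add: X_def)

lemma vx_TE: assumes "TEp l h j c" "w \<in> H_verts l" "pt l w \<in> closed_segment (pt l (h,j)) (pt l (h-1,c))"
  shows "pt l w \<in> {pt l (h,j), pt l (h-1,c)}"
proof -
  obtain h' j' where w: "w = (h',j')" by force
  have "pt l w \<in> closed_segment (pt l (h-1,c)) (pt l (h,j))" using assms(3) by (simp add: closed_segment_commute)
  from strip_vx[OF this, of "h-1" h'] w show ?thesis by auto
qed

lemma vx_BE: assumes "BEp l h j c" "w \<in> H_verts l" "pt l w \<in> closed_segment (pt l (h,j)) (pt l (h+1,c))"
  shows "pt l w \<in> {pt l (h,j), pt l (h+1,c)}"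
proof -
  obtain h' j' where w: "w = (h',j')" by force
  from strip_vx[OF assms(3), of h h'] w show ?thesis by auto
qed

lemma vx_PE: assumes "PEp l j" "l \<ge> 1" "w \<in> H_verts l" "pt l w \<in> closed_segment (pt l (0,2*j-1)) (pt l (0,2*j))"
  shows "pt l w \<in> {pt l (0,2*j-1), pt l (0,2*j)}"
proof -
  obtain h' j' where w: "w = (h',j')" by force
  have i: "Im (pt l w) = 0 \<and> 4 * real j - 3 \<le> Re (pt l w) \<and> Re (pt l w) \<le> 4 * real j - 1"
    using PE_info[OF assms(1,2,4)] .
  then have h0: "h' = 0" using w by simp
  then have "4 * real j - 3 \<le> 2 * real j' - 1" "2 * real j' - 1 \<le> 4 * real j - 1"
    using i w X0[OF assms(2)] by auto
  then have "real (2 * j) \<le> real j' + 1" "real j' \<le> real (2*j)" by auto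
  then have "2 * j \<le> j' + 1" "j' \<le> 2 * j" by linarith+
  then have "j' = 2*j-1 \<or> j' = 2*j" by auto
  then show ?thesis using w h0 by auto
qed

lemma vx_root: assumes "w \<in> H_verts l" "pt l w \<in> closed_segment (pt l (int l,1)) (pt l (- int l,1))"
  shows "pt l w \<in> {pt l (int l,1), pt l (- int l,1)}"
proof -
  obtain h' j' where w: "w = (h',j')" by force
  have "X l h' j' = -1" using root_info[OF assms(2)] w by simp
  then show ?thesis using X_root[of h' j' l] assms(1) w by auto
qed

lemma same_TE: assumes "TEp l h j c" "TEp l h j' c'" "c < c'"
  "z \<in> closed_segment (pt l (h,j)) (pt l (h-1,c))" "z \<in> closed_segment (pt l (h,j')) (pt l (h-1,c'))"
  shows "z \<in> pt l ` H_verts l"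
proof -
  have h: "1 \<le> h" "h \<le> int l" "c = 2*j-1 \<or> c = 2*j" "c' = 2*j'-1 \<or> c' = 2*j'"
    using assms unfolding TEp_def by auto
  have jj: "j \<le> j'" using h assms(3) by auto
  have nr: "nat \<bar>h-1\<bar> \<noteq> l" using h by auto
  have "z = pt l (h-1,c) \<or> z = pt l (h,j)"
    apply (rule same_strip[where a'="pt l (h-1,c')" and b'="pt l (h,j')"])
    using assms(4,5) X_smono[OF assms(3) nr] X_mono[OF jj] by (auto simp: closed_segment_commute)
  then show ?thesis using TE_verts[OF assms(1)] by auto
qed

lemma same_BE: assumes "BEp l h j c" "BEp l h j' c'" "c < c'"
  "z \<in> closed_segment (pt l (h,j)) (pt l (h+1,c))" "z \<in> closed_segment (pt l (h,j')) (pt l (h+1,c'))"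
  shows "z \<in> pt l ` H_verts l"
proof -
  have h: "- int l \<le> h" "h \<le> -1" "c = 2*j-1 \<or> c = 2*j" "c' = 2*j'-1 \<or> c' = 2*j'"
    using assms unfolding BEp_def by auto
  have jj: "j \<le> j'" using h assms(3) by auto
  have nr: "nat \<bar>h+1\<bar> \<noteq> l" using h by auto
  have "z = pt l (h,j) \<or> z = pt l (h+1,c)"
    apply (rule same_strip[where a'="pt l (h,j')" and b'="pt l (h+1,c')"])
    using assms(4,5) X_smono[OF assms(3) nr] X_mono[OF jj] by auto
  then show ?thesis using BE_verts[OF assms(1)] by auto
qed

definition stripA :: "nat \<Rightarrow> hvert set \<Rightarrow> int \<Rightarrow> bool" where
  "stripA l e a \<longleftrightarrow> (\<exists>h j c. TEp l h j c \<and> e = {(h,j),(h-1,c)} \<and> a = h-1) \<or>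
                     (\<exists>h j c. BEp l h j c \<and> e = {(h,j),(h+1,c)} \<and> a = h)"

lemma info: assumes "l \<ge> 1" "e \<in> H_edges l" "e = {u,v}" "z \<in> closed_segment (pt l u) (pt l v)"
  shows "(\<exists>a. SP l z a \<and> stripA l e a) \<or>
    (\<exists>j. PEp l j \<and> e = {(0,2*j-1),(0,2*j)} \<and> Im z = 0 \<and> 4 * real j - 3 \<le> Re z \<and> Re z \<le> 4 * real j - 1) \<or>
    (e = {(int l,1),(- int l,1)} \<and> Re z = -1)"
  using assms(2)[unfolded edge_iff]
proof (elim disjE exE conjE)
  fix h j c assume e: "e = {(h, j), (h - 1, c)}" and t: "TEp l h j c"
  have "z \<in> closed_segment (pt l (h,j)) (pt l (h-1,c))" using assms(3,4) e seg_doubleton[of u v "(h,j)" "(h-1,c)" "pt l"] by simp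
  from TE_SP[OF t this] show ?thesis using t e unfolding stripA_def by blast
next
  fix h j c assume e: "e = {(h, j), (h + 1, c)}" and t: "BEp l h j c"
  have "z \<in> closed_segment (pt l (h,j)) (pt l (h+1,c))" using assms(3,4) e seg_doubleton[of u v "(h,j)" "(h+1,c)" "pt l"] by simp
  from BE_SP[OF t this] show ?thesis using t e unfolding stripA_def by blast
next
  assume e: "e = {(int l, 1), (- int l, 1)}"
  have "z \<in> closed_segment (pt l (int l, 1)) (pt l (- int l, 1))" using assms(3,4) e seg_doubleton[of u v "(int l, 1)" "(- int l, 1)" "pt l"] by simp
  from root_info[OF this] show ?thesis using e by blast
next
  fix j assume e: "e = {(0, 2 * j - 1), (0, 2 * j)}" and t: "PEp l j"
  have "z \<in> closed_segment (pt l (0, 2 * j - 1)) (pt l (0, 2 * j))" using assms(3,4) e seg_doubleton[of u v "(0, 2 * j - 1)" "(0, 2 * j)" "pt l"] by simp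
  from PE_info[OF t assms(1) this] show ?thesis using t e by blast
qed

lemma TE_det: "TEp l h j c \<Longrightarrow> TEp l h j' c \<Longrightarrow> j = j'"
  unfolding TEp_def by auto
lemma BE_det: "BEp l h j c \<Longrightarrow> BEp l h j' c \<Longrightarrow> j = j'"
  unfolding BEp_def by auto

lemma same_strip_case:
  assumes "stripA l e a" "stripA l e' a" "e \<noteq> e'" "e = {u,v}" "e' = {u',v'}"
    "z \<in> closed_segment (pt l u) (pt l v)" "z \<in> closed_segment (pt l u') (pt l v')"
  shows "z \<in> pt l ` H_verts l"
  using assms(1,2) unfolding stripA_def
proof (elim disjE exE conjE)
  fix h j c h' j' c'
  assume t: "TEp l h j c" "e = {(h, j), (h - 1, c)}" "a = h - 1" and t': "TEp l h' j' c'" "e' = {(h', j'), (h' - 1, c')}" "a = h' - 1"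
  have hh: "h' = h" using t t' by simp
  have z1: "z \<in> closed_segment (pt l (h,j)) (pt l (h-1,c))" using assms(4,6) t seg_doubleton[of u v "(h,j)" "(h-1,c)" "pt l"] by simp
  have z2: "z \<in> closed_segment (pt l (h,j')) (pt l (h-1,c'))" using assms(5,7) t' hh seg_doubleton[of u' v' "(h,j')" "(h-1,c')" "pt l"] by simp
  have "c \<noteq> c'" using TE_det[of l h j c j'] t t' hh assms(3) by auto
  then have "c < c' \<or> c' < c" by auto
  then show ?thesis using same_TE[OF t(1) t'(1)[unfolded hh] _ z1 z2] same_TE[OF t'(1)[unfolded hh] t(1) _ z2 z1] by blast
next
  fix h j c h' j' c'
  assume t: "TEp l h j c" "e = {(h, j), (h - 1, c)}" "a = h - 1" and t': "BEp l h' j' c'" "e' = {(h', j'), (h' + 1, c')}" "a = h'"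
  then show ?thesis unfolding TEp_def BEp_def by auto
next
  fix h j c h' j' c'
  assume t: "BEp l h j c" "e = {(h, j), (h + 1, c)}" "a = h" and t': "TEp l h' j' c'" "e' = {(h', j'), (h' - 1, c')}" "a = h' - 1"
  then show ?thesis unfolding TEp_def BEp_def by auto
next
  fix h j c h' j' c'
  assume t: "BEp l h j c" "e = {(h, j), (h + 1, c)}" "a = h" and t': "BEp l h' j' c'" "e' = {(h', j'), (h' + 1, c')}" "a = h'"
  have hh: "h' = h" using t t' by simp
  have z1: "z \<in> closed_segment (pt l (h,j)) (pt l (h+1,c))" using assms(4,6) t seg_doubleton[of u v "(h,j)" "(h+1,c)" "pt l"] by simp
  have z2: "z \<in> closed_segment (pt l (h,j')) (pt l (h+1,c'))" using assms(5,7) t' hh seg_doubleton[of u' v' "(h,j')" "(h+1,c')" "pt l"] by simp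
  have "c \<noteq> c'" using BE_det[of l h j c j'] t t' hh assms(3) by auto
  then have "c < c' \<or> c' < c" by auto
  then show ?thesis using same_BE[OF t(1) t'(1)[unfolded hh] _ z1 z2] same_BE[OF t'(1)[unfolded hh] t(1) _ z2 z1] by blast
qed

lemma H_planar: assumes l1: "l \<ge> 1" shows "planar (H_verts l) (H_edges l)"
proof (rule planar_straight[where p="pt l"])
  show "inj_on (pt l) (H_verts l)" by (rule pt_inj)
next
  fix e assume "e \<in> H_edges l"
  then show "\<exists>u v. e = {u, v} \<and> u \<noteq> v \<and> u \<in> H_verts l \<and> v \<in> H_verts l"
    unfolding edge_iff
  proof (elim disjE exE conjE)
    fix h j c assume "e = {(h, j), (h - 1, c)}" "TEp l h j c"
    then show ?thesis using TE_verts by (intro exI[of _ "(h,j)"] exI[of _ "(h-1,c)"]) auto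
  next
    fix h j c assume "e = {(h, j), (h + 1, c)}" "BEp l h j c"
    then show ?thesis using BE_verts by (intro exI[of _ "(h,j)"] exI[of _ "(h+1,c)"]) auto
  next
    assume "e = {(int l, 1), (- int l, 1)}"
    then show ?thesis using root_verts l1 by (intro exI[of _ "(int l, 1)"] exI[of _ "(- int l, 1)"]) auto
  next
    fix j assume e: "e = {(0, 2 * j - 1), (0, 2 * j)}" and p: "PEp l j"
    have "j \<ge> 1" using p unfolding PEp_def by auto
    then show ?thesis using PE_verts[OF p l1] e by (intro exI[of _ "(0, 2 * j - 1)"] exI[of _ "(0, 2*j)"]) auto
  qed
next
  fix e u v assume eE: "e \<in> H_edges l" and euv: "e = {u, v}"
  show "closed_segment (pt l u) (pt l v) \<inter> pt l ` H_verts l \<subseteq> {pt l u, pt l v}"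
  proof
    fix z assume z: "z \<in> closed_segment (pt l u) (pt l v) \<inter> pt l ` H_verts l"
    then obtain w where w: "w \<in> H_verts l" "z = pt l w" by auto
    have zs: "pt l w \<in> closed_segment (pt l u) (pt l v)" using z w by simp
    have pe: "{pt l u, pt l v} = {pt l a, pt l b}" if "{u,v} = {a,b}" for a b
      using that by (auto simp: doubleton_eq_iff)
    from eE[unfolded edge_iff] show "z \<in> {pt l u, pt l v}"
    proof (elim disjE exE conjE)
      fix h j c assume e: "e = {(h, j), (h - 1, c)}" and t: "TEp l h j c"
      note uv' = trans[OF euv[symmetric] e]
      have "pt l w \<in> closed_segment (pt l (h,j)) (pt l (h-1,c))"
        using zs seg_doubleton[OF uv', of "pt l"] by simp
      from vx_TE[OF t w(1) this] show ?thesis using pe[of "(h,j)" "(h-1,c)"] e euv w by simp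
    next
      fix h j c assume e: "e = {(h, j), (h + 1, c)}" and t: "BEp l h j c"
      note uv' = trans[OF euv[symmetric] e]
      have "pt l w \<in> closed_segment (pt l (h,j)) (pt l (h+1,c))"
        using zs seg_doubleton[OF uv', of "pt l"] by simp
      from vx_BE[OF t w(1) this] show ?thesis using pe[of "(h,j)" "(h+1,c)"] e euv w by simp
    next
      assume e: "e = {(int l, 1), (- int l, 1)}"
      note uv' = trans[OF euv[symmetric] e]
      have "pt l w \<in> closed_segment (pt l (int l, 1)) (pt l (- int l, 1))"
        using zs seg_doubleton[OF uv', of "pt l"] by simp
      from vx_root[OF w(1) this] show ?thesis using pe[of "(int l, 1)" "(- int l, 1)"] e euv w by simp
    next
      fix j assume e: "e = {(0, 2 * j - 1), (0, 2 * j)}" and t: "PEp l j"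
      note uv' = trans[OF euv[symmetric] e]
      have "pt l w \<in> closed_segment (pt l (0, 2 * j - 1)) (pt l (0, 2 * j))"
        using zs seg_doubleton[OF uv', of "pt l"] by simp
      from vx_PE[OF t l1 w(1) this] show ?thesis using pe[of "(0, 2 * j - 1)" "(0, 2 * j)"] e euv w by simp
    qed
  qed
next
  fix e e' u v u' v' z
  assume eE: "e \<in> H_edges l" and eE': "e' \<in> H_edges l" and ne: "e \<noteq> e'" and euv: "e = {u, v}" and euv': "e' = {u', v'}"
    and z: "z \<in> closed_segment (pt l u) (pt l v)" and z': "z \<in> closed_segment (pt l u') (pt l v')"
  note i1 = info[OF l1 eE euv z] and i2 = info[OF l1 eE' euv' z']
  from i1 show "z \<in> pt l ` H_verts l"
  proof (elim disjE exE conjE)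
    fix a assume s1: "SP l z a" "stripA l e a"
    from i2 show ?thesis
    proof (elim disjE exE conjE)
      fix b assume s2: "SP l z b" "stripA l e' b"
      show ?thesis
      proof (cases "a = b")
        case True then show ?thesis using same_strip_case[OF s1(2) _ ne euv euv' z z'] s2 by simp
      next
        case False then show ?thesis using SP_SP s1 s2 by blast
      qed
    next
      assume "Im z = 0" then show ?thesis using SP_int[OF s1(1), of 0] by simp
    next
      assume "Re z = -1" then show ?thesis using SP_re[OF s1(1)] by simp
    qed
  next
    fix j assume p1: "PEp l j" "e = {(0, 2 * j - 1), (0, 2 * j)}" "Im z = 0" "4 * real j - 3 \<le> Re z" "Re z \<le> 4 * real j - 1"
    from i2 show ?thesis
    proof (elim disjE exE conjE)
      fix b assume s2: "SP l z b" "stripA l e' b"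
      show ?thesis using SP_int[OF s2(1), of 0] p1 by simp
    next
      fix j' assume p2: "PEp l j'" "e' = {(0, 2 * j' - 1), (0, 2 * j')}" "4 * real j' - 3 \<le> Re z" "Re z \<le> 4 * real j' - 1"
      have "j \<noteq> j'"
      proof
        assume "j = j'" then have "e = e'" using p1(2) p2(2) by simp
        with ne show False ..
      qed
      then have "j + 1 \<le> j' \<or> j' + 1 \<le> j" by auto
      then have "real j + 1 \<le> real j' \<or> real j' + 1 \<le> real j" by linarith
      then show ?thesis using p1 p2 by linarith
    next
      assume "Re z = -1"
      moreover have "real j \<ge> 1" using p1 unfolding PEp_def by auto
      ultimately show ?thesis using p1 by linarith
    qed
  next
    assume r1: "e = {(int l, 1), (- int l, 1)}" "Re z = -1"
    from i2 show ?thesis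
    proof (elim disjE exE conjE)
      fix b assume s2: "SP l z b" "stripA l e' b"
      show ?thesis using SP_re[OF s2(1)] r1 by simp
    next
      fix j' assume p2: "PEp l j'" "4 * real j' - 3 \<le> Re z"
      moreover have "real j' \<ge> 1" using p2 unfolding PEp_def by auto
      ultimately show ?thesis using r1 by linarith
    next
      assume "e' = {(int l, 1), (- int l, 1)}" then show ?thesis using r1 ne by simp
    qed
  qed
qed

lemma adj_step: "{x,y} \<in> G \<Longrightarrow> x \<noteq> y \<Longrightarrow> (x,y) \<in> (adj_rel G)\<^sup>*"
  unfolding adj_rel_def by auto

lemma adj_sym: "(x,y) \<in> (adj_rel G)\<^sup>* \<Longrightarrow> (y,x) \<in> (adj_rel G)\<^sup>*"
proof (induction rule: rtrancl_induct)
  case base then show ?case by simp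
next
  case (step y z)
  then have "(z,y) \<in> adj_rel G" unfolding adj_rel_def by (auto simp: insert_commute)
  then show ?case using step by (meson converse_rtrancl_into_rtrancl)
qed

lemma reroute:
  assumes "(x,y) \<in> (adj_rel G)\<^sup>*" "e = {a,b}" "(a,b) \<in> (adj_rel (G - {e}))\<^sup>*"
  shows "(x,y) \<in> (adj_rel (G - {e}))\<^sup>*"
  using assms(1)
proof (induction rule: rtrancl_induct)
  case base then show ?case by simp
next
  case (step y z)
  show ?case
  proof (cases "{y,z} = e")
    case True
    then have "(y,z) = (a,b) \<or> (y,z) = (b,a)" using assms(2) by (auto simp: doubleton_eq_iff)
    moreover have "(b,a) \<in> (adj_rel (G - {e}))\<^sup>*" using assms(3) by (rule adj_sym)
    ultimately have "(y,z) \<in> (adj_rel (G - {e}))\<^sup>*" using assms(3) by auto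
    then show ?thesis using step by (meson rtrancl_trans)
  next
    case False
    then have "(y,z) \<in> adj_rel (G - {e})" using step unfolding adj_rel_def by auto
    then show ?thesis using step by (meson rtrancl.rtrancl_into_rtrancl)
  qed
qed

lemma parent_arith: fixes j m :: nat assumes "1 \<le> j" "j \<le> 2 * m"
  shows "1 \<le> (j+1) div 2" "(j+1) div 2 \<le> m" "j = 2 * ((j+1) div 2) - 1 \<or> j = 2 * ((j+1) div 2)"
  using assms by presburger+

lemma up_top:
  assumes hyp: "\<And>h j c. TEp l h j c \<Longrightarrow> h \<ge> hlo + 1 \<Longrightarrow> {(h,j),(h-1,c)} \<in> G"
  shows "nat (int l - k) = n \<Longrightarrow> 0 \<le> k \<Longrightarrow> hlo \<le> k \<Longrightarrow> (k,j) \<in> H_verts l \<Longrightarrow> ((k,j),(int l,1)) \<in> (adj_rel G)\<^sup>*"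
proof (induction n arbitrary: k j)
  case 0
  then have "k = int l" "j = 1" by auto
  then show ?case by simp
next
  case (Suc n)
  have k: "k < int l" "0 \<le> k" "k \<le> int l" using Suc.prems by auto
  have pw: "(2::nat) ^ nat (int l - k) = 2 * 2 ^ nat (int l - (k+1))"
    using pow_nat_succ[of "int l - (k+1)"] k by (simp add: algebra_simps)
  have j: "1 \<le> j" "j \<le> 2 * 2 ^ nat (int l - (k+1))" using Suc.prems k pw by auto
  define j' where "j' = (j+1) div 2"
  note pa = parent_arith[OF j, folded j'_def]
  have t: "TEp l (k+1) j' j" unfolding TEp_def using pa k by auto
  have "{(k+1,j'),(k,j)} \<in> G" using hyp[OF t] Suc.prems by simp
  then have s: "((k,j),(k+1,j')) \<in> (adj_rel G)\<^sup>*" by (intro adj_step) (auto simp: insert_commute)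
  have nn: "nat (int l - (k+1)) = n" using Suc.prems(1) by (simp add: nat_eq_iff split: if_split_asm)
  have "((k+1,j'),(int l,1)) \<in> (adj_rel G)\<^sup>*"
    using Suc.IH[OF nn] Suc.prems TE_verts(1)[OF t] by auto
  then show ?case using s by (meson rtrancl_trans)
qed

lemma down_top:
  assumes hyp: "\<And>h j c. TEp l h j c \<Longrightarrow> h \<le> hhi \<Longrightarrow> {(h,j),(h-1,c)} \<in> G"
  shows "(int n,j) \<in> H_verts l \<Longrightarrow> int n \<le> hhi \<Longrightarrow> \<exists>j0. (0,j0) \<in> H_verts l \<and> ((int n,j),(0,j0)) \<in> (adj_rel G)\<^sup>*"
proof (induction n arbitrary: j)
  case 0 then show ?case by auto
next
  case (Suc n)
  have t: "TEp l (int n + 1) j (2*j-1)" unfolding TEp_def using Suc.prems by (auto simp: add.commute)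
  have "{(int n + 1, j), (int n + 1 - 1, 2*j-1)} \<in> G" using hyp[OF t] Suc.prems by simp
  then have s: "((int n + 1, j), (int n + 1 - 1, 2*j-1)) \<in> (adj_rel G)\<^sup>*" by (rule adj_step) simp
  obtain j0 where j0: "(0,j0) \<in> H_verts l" "((int n, 2*j-1),(0,j0)) \<in> (adj_rel G)\<^sup>*"
    using Suc.IH[of "2*j-1"] TE_verts(2)[OF t] Suc.prems by auto
  have "((int n + 1, j),(0,j0)) \<in> (adj_rel G)\<^sup>*" using s j0(2) by (simp add: rtrancl_trans)
  moreover have "int (Suc n) = int n + 1" by simp
  ultimately show ?case using j0(1) by metis
qed

lemma up_bot:
  assumes hyp: "\<And>h j c. BEp l h j c \<Longrightarrow> h + 1 \<le> hlo \<Longrightarrow> {(h,j),(h+1,c)} \<in> G"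
  shows "nat (int l + k) = n \<Longrightarrow> k \<le> 0 \<Longrightarrow> k \<le> hlo \<Longrightarrow> (k,j) \<in> H_verts l \<Longrightarrow> ((k,j),(- int l,1)) \<in> (adj_rel G)\<^sup>*"
proof (induction n arbitrary: k j)
  case 0
  then have "k = - int l" "j = 1" by auto
  then show ?case by simp
next
  case (Suc n)
  have k: "- int l < k" "k \<le> 0" using Suc.prems by auto
  have ab: "\<bar>k\<bar> = - k" "\<bar>k - 1\<bar> = 1 - k" using k by auto
  have pw: "(2::nat) ^ nat (int l - \<bar>k\<bar>) = 2 * 2 ^ nat (int l - \<bar>k - 1\<bar>)"
    using pow_nat_succ[of "int l + k - 1"] k ab by (simp add: algebra_simps)
  have j: "1 \<le> j" "j \<le> 2 * 2 ^ nat (int l - \<bar>k - 1\<bar>)" using Suc.prems k pw by auto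
  define j' where "j' = (j+1) div 2"
  note pa = parent_arith[OF j, folded j'_def]
  have t: "BEp l (k-1) j' j" unfolding BEp_def using pa k by auto
  have "{(k-1,j'),(k,j)} \<in> G" using hyp[OF t] Suc.prems by simp
  then have s: "((k,j),(k-1,j')) \<in> (adj_rel G)\<^sup>*" by (intro adj_step) (auto simp: insert_commute)
  have nn: "nat (int l + (k-1)) = n" using Suc.prems(1) by (simp add: nat_eq_iff split: if_split_asm)
  have "((k-1,j'),(- int l,1)) \<in> (adj_rel G)\<^sup>*"
    using Suc.IH[OF nn] Suc.prems BE_verts(1)[OF t] k by auto
  then show ?case using s by (meson rtrancl_trans)
qed

lemma down_bot:
  assumes hyp: "\<And>h j c. BEp l h j c \<Longrightarrow> hhi \<le> h \<Longrightarrow> {(h,j),(h+1,c)} \<in> G"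
  shows "(- int n,j) \<in> H_verts l \<Longrightarrow> hhi \<le> - int n \<Longrightarrow> \<exists>j0. (0,j0) \<in> H_verts l \<and> ((- int n,j),(0,j0)) \<in> (adj_rel G)\<^sup>*"
proof (induction n arbitrary: j)
  case 0 then show ?case by auto
next
  case (Suc n)
  have t: "BEp l (- int n - 1) j (2*j-1)" unfolding BEp_def using Suc.prems by (auto simp: add.commute)
  have "{(- int n - 1, j), (- int n - 1 + 1, 2*j-1)} \<in> G" using hyp[OF t] Suc.prems by simp
  then have s: "((- int n - 1, j), (- int n - 1 + 1, 2*j-1)) \<in> (adj_rel G)\<^sup>*" by (rule adj_step) simp
  obtain j0 where j0: "(0,j0) \<in> H_verts l" "((- int n, 2*j-1),(0,j0)) \<in> (adj_rel G)\<^sup>*"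
    using Suc.IH[of "2*j-1"] BE_verts(2)[OF t] Suc.prems by auto
  have "((- int n - 1, j),(0,j0)) \<in> (adj_rel G)\<^sup>*" using s j0(2) by (simp add: rtrancl_trans)
  moreover have "- int (Suc n) = - int n - 1" by simp
  ultimately show ?case using j0(1) by metis
qed

lemma TE_in: "TEp l h j c \<Longrightarrow> {(h,j),(h-1,c)} \<in> H_edges l"
  unfolding edge_iff by blast
lemma BE_in: "BEp l h j c \<Longrightarrow> {(h,j),(h+1,c)} \<in> H_edges l"
  unfolding edge_iff by blast
lemma root_in: "{(int l,1),(- int l,1)} \<in> H_edges l"
  unfolding edge_iff by blast
lemma PE_in: "PEp l j \<Longrightarrow> {(0,2*j-1),(0,2*j)} \<in> H_edges l"
  unfolding edge_iff by blast

lemma TE_lv: "TEp l h j c \<Longrightarrow> 1 \<le> h \<and> h \<le> int l" unfolding TEp_def by auto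
lemma BE_lv: "BEp l h j c \<Longrightarrow> - int l \<le> h \<and> h \<le> -1" unfolding BEp_def by auto

lemma to_root_E: assumes "v \<in> H_verts l" shows "(v, (int l, 1)) \<in> (adj_rel (H_edges l))\<^sup>*"
proof -
  obtain k j where v: "v = (k,j)" by force
  have hT: "\<And>h j c. TEp l h j c \<Longrightarrow> h \<ge> 0 + 1 \<Longrightarrow> {(h,j),(h-1,c)} \<in> H_edges l" using TE_in by blast
  have hB: "\<And>h j c. BEp l h j c \<Longrightarrow> h + 1 \<le> 0 \<Longrightarrow> {(h,j),(h+1,c)} \<in> H_edges l" using BE_in by blast
  show ?thesis
  proof (cases "k \<ge> 0")
    case True
    show ?thesis using up_top[where l=l and hlo=0 and G="H_edges l" and k=k and n="nat (int l - k)" and j=j, OF hT] True assms v by auto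
  next
    case False
    have "((k,j),(- int l,1)) \<in> (adj_rel (H_edges l))\<^sup>*"
      using up_bot[where l=l and hlo=0 and G="H_edges l" and k=k and n="nat (int l + k)" and j=j, OF hB] False assms v by auto
    moreover have "((- int l,1),(int l,1)) \<in> (adj_rel (H_edges l))\<^sup>*"
    proof (cases "l = 0")
      case True then show ?thesis by simp
    next
      case False then show ?thesis using root_in[of l] by (intro adj_step) (auto simp: insert_commute)
    qed
    ultimately show ?thesis using v by (meson rtrancl_trans)
  qed
qed

lemma conn_E: "connected_graph (H_verts l) (H_edges l)"
  unfolding connected_graph_def
proof (intro conjI ballI)
  show "H_verts l \<noteq> {}" using root_verts(1)[of l] by (metis empty_iff)
  fix u v assume "u \<in> H_verts l" "v \<in> H_verts l"
  then show "(u,v) \<in> (adj_rel (H_edges l))\<^sup>*" using to_root_E adj_sym by (meson rtrancl_trans)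
qed

lemma cyc: assumes l1: "l \<ge> 1" and eE: "e \<in> H_edges l"
  shows "\<exists>a b. e = {a,b} \<and> (a,b) \<in> (adj_rel (H_edges l - {e}))\<^sup>*"
  using eE[unfolded edge_iff]
proof (elim disjE exE conjE)
  fix h j c assume e: "e = {(h, j), (h - 1, c)}" and t: "TEp l h j c"
  let ?G = "H_edges l - {e}"
  have hv: "1 \<le> h" "h \<le> int l" using TE_lv[OF t] by auto
  have hd: "\<And>h' j' c'. TEp l h' j' c' \<Longrightarrow> h' \<le> h - 1 \<Longrightarrow> {(h',j'),(h'-1,c')} \<in> ?G"
    using TE_in e by (auto simp: doubleton_eq_iff)
  obtain j0 where j0: "(0,j0) \<in> H_verts l" "((int (nat (h-1)), c),(0,j0)) \<in> (adj_rel ?G)\<^sup>*"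
    using down_top[where l=l and hhi="h-1" and G="?G" and n="nat (h-1)" and j=c, OF hd] TE_verts(2)[OF t] hv by auto
  have p1: "((h-1, c),(0,j0)) \<in> (adj_rel ?G)\<^sup>*" using j0(2) hv by simp
  have hb: "\<And>h' j' c'. BEp l h' j' c' \<Longrightarrow> h' + 1 \<le> 0 \<Longrightarrow> {(h',j'),(h'+1,c')} \<in> ?G"
    using BE_in e hv by (auto simp: doubleton_eq_iff)
  have p2: "((0,j0),(- int l,1)) \<in> (adj_rel ?G)\<^sup>*"
    using up_bot[where l=l and hlo=0 and G="?G" and k=0 and n="l" and j=j0, OF hb] j0(1) by auto
  have "{(int l,1),(- int l,1)} \<in> ?G" using root_in[of l] e hv by (auto simp: doubleton_eq_iff)
  then have p3: "((- int l,1),(int l,1)) \<in> (adj_rel ?G)\<^sup>*" using l1 by (intro adj_step) (auto simp: insert_commute)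
  have hu: "\<And>h' j' c'. TEp l h' j' c' \<Longrightarrow> h' \<ge> h + 1 \<Longrightarrow> {(h',j'),(h'-1,c')} \<in> ?G"
    using TE_in e by (auto simp: doubleton_eq_iff)
  have p4: "((h,j),(int l,1)) \<in> (adj_rel ?G)\<^sup>*"
    using up_top[where l=l and hlo=h and G="?G" and k=h and n="nat (int l - h)" and j=j, OF hu] TE_verts(1)[OF t] hv by auto
  have "((h-1,c),(h,j)) \<in> (adj_rel ?G)\<^sup>*" using p1 p2 p3 adj_sym[OF p4] by (meson rtrancl_trans)
  then show ?thesis using e adj_sym by blast
next
  fix h j c assume e: "e = {(h, j), (h + 1, c)}" and t: "BEp l h j c"
  let ?G = "H_edges l - {e}"
  have hv: "- int l \<le> h" "h \<le> -1" using BE_lv[OF t] by auto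
  have hd: "\<And>h' j' c'. BEp l h' j' c' \<Longrightarrow> h + 1 \<le> h' \<Longrightarrow> {(h',j'),(h'+1,c')} \<in> ?G"
    using BE_in e by (auto simp: doubleton_eq_iff)
  have eq: "- int (nat (- h - 1)) = h + 1" using hv by simp
  obtain j0 where j0: "(0,j0) \<in> H_verts l" "((h+1, c),(0,j0)) \<in> (adj_rel ?G)\<^sup>*"
    using down_bot[where l=l and hhi="h+1" and G="?G" and n="nat (- h - 1)" and j=c, OF hd, unfolded eq] BE_verts(2)[OF t] by blast
  have p1: "((h+1, c),(0,j0)) \<in> (adj_rel ?G)\<^sup>*" using j0(2) by simp
  have ht: "\<And>h' j' c'. TEp l h' j' c' \<Longrightarrow> h' \<ge> 0 + 1 \<Longrightarrow> {(h',j'),(h'-1,c')} \<in> ?G"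
    using TE_in e hv by (auto simp: doubleton_eq_iff)
  have p2: "((0,j0),(int l,1)) \<in> (adj_rel ?G)\<^sup>*"
    using up_top[where l=l and hlo=0 and G="?G" and k=0 and n="l" and j=j0, OF ht] j0(1) by auto
  have "{(int l,1),(- int l,1)} \<in> ?G" using root_in[of l] e hv by (auto simp: doubleton_eq_iff)
  then have p3: "((int l,1),(- int l,1)) \<in> (adj_rel ?G)\<^sup>*" using l1 by (intro adj_step) auto
  have hu: "\<And>h' j' c'. BEp l h' j' c' \<Longrightarrow> h' + 1 \<le> h \<Longrightarrow> {(h',j'),(h'+1,c')} \<in> ?G"
    using BE_in e by (auto simp: doubleton_eq_iff)
  have p4: "((h,j),(- int l,1)) \<in> (adj_rel ?G)\<^sup>*"
    using up_bot[where l=l and hlo=h and G="?G" and k=h and n="nat (int l + h)" and j=j, OF hu] BE_verts(1)[OF t] hv by auto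
  have "((h+1,c),(h,j)) \<in> (adj_rel ?G)\<^sup>*" using p1 p2 p3 adj_sym[OF p4] by (meson rtrancl_trans)
  then show ?thesis using e adj_sym by blast
next
  assume e: "e = {(int l, 1), (- int l, 1)}"
  let ?G = "H_edges l - {e}"
  have hd: "\<And>h' j' c'. TEp l h' j' c' \<Longrightarrow> h' \<le> int l \<Longrightarrow> {(h',j'),(h'-1,c')} \<in> ?G"
    using TE_in e TE_lv by (fastforce simp: doubleton_eq_iff)
  obtain j0 where j0: "(0,j0) \<in> H_verts l" "((int l, 1),(0,j0)) \<in> (adj_rel ?G)\<^sup>*"
    using down_top[where l=l and hhi="int l" and G="?G" and n="l" and j=1, OF hd] root_verts(1)[of l] by auto
  have hb: "\<And>h' j' c'. BEp l h' j' c' \<Longrightarrow> h' + 1 \<le> 0 \<Longrightarrow> {(h',j'),(h'+1,c')} \<in> ?G"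
    using BE_in e l1 by (auto simp: doubleton_eq_iff)
  have p2: "((0,j0),(- int l,1)) \<in> (adj_rel ?G)\<^sup>*"
    using up_bot[where l=l and hlo=0 and G="?G" and k=0 and n="l" and j=j0, OF hb] j0(1) by auto
  have "((int l, 1),(- int l,1)) \<in> (adj_rel ?G)\<^sup>*" using j0(2) p2 by (meson rtrancl_trans)
  then show ?thesis using e by blast
next
  fix j assume e: "e = {(0, 2 * j - 1), (0, 2 * j)}" and t: "PEp l j"
  let ?G = "H_edges l - {e}"
  have ht: "\<And>h' j' c'. TEp l h' j' c' \<Longrightarrow> h' \<ge> 0 + 1 \<Longrightarrow> {(h',j'),(h'-1,c')} \<in> ?G"
    using TE_in e by (auto simp: doubleton_eq_iff)
  have p1: "((0,2*j-1),(int l,1)) \<in> (adj_rel ?G)\<^sup>*"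
    using up_top[where l=l and hlo=0 and G="?G" and k=0 and n="l" and j="2*j-1", OF ht] PE_verts(1)[OF t l1] by auto
  have p2: "((0,2*j),(int l,1)) \<in> (adj_rel ?G)\<^sup>*"
    using up_top[where l=l and hlo=0 and G="?G" and k=0 and n="l" and j="2*j", OF ht] PE_verts(2)[OF t l1] by auto
  have "((0,2*j-1),(0,2*j)) \<in> (adj_rel ?G)\<^sup>*" using p1 adj_sym[OF p2] by (meson rtrancl_trans)
  then show ?thesis using e by blast
qed

lemma fin_V: "finite (H_verts l)"
proof -
  have "H_verts l \<subseteq> {- int l..int l} \<times> {0..2^l}"
  proof
    fix v assume v: "v \<in> H_verts l"
    obtain h j where hj: "v = (h,j)" by force
    have "nat (int l - \<bar>h\<bar>) \<le> l" by simp
    then have p: "(2::nat) ^ nat (int l - \<bar>h\<bar>) \<le> 2 ^ l" by (rule power_increasing) simp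
    have j: "j \<le> 2 ^ nat (int l - \<bar>h\<bar>)" and "- int l \<le> h" "h \<le> int l" using v hj by auto
    moreover have "j \<le> 2 ^ l" by (rule le_trans[OF j p])
    ultimately show "v \<in> {- int l..int l} \<times> {0..2^l}" using hj by auto
  qed
  then show ?thesis by (rule finite_subset) simp
qed

lemma edge_sub: assumes "l \<ge> 1" "e \<in> H_edges l" shows "e \<subseteq> H_verts l"
  using assms(2)[unfolded edge_iff]
proof (elim disjE exE conjE)
  fix h j c assume "e = {(h, j), (h - 1, c)}" "TEp l h j c" then show ?thesis using TE_verts by auto
next
  fix h j c assume "e = {(h, j), (h + 1, c)}" "BEp l h j c" then show ?thesis using BE_verts by auto
next
  assume "e = {(int l, 1), (- int l, 1)}" then show ?thesis using root_verts by auto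
next
  fix j assume "e = {(0, 2 * j - 1), (0, 2 * j)}" "PEp l j" then show ?thesis using PE_verts assms(1) by auto
qed

lemma fin_E: assumes "l \<ge> 1" shows "finite (H_edges l)"
proof -
  have "H_edges l \<subseteq> Pow (H_verts l)" using edge_sub[OF assms] by auto
  then show ?thesis using fin_V by (meson finite_Pow_iff finite_subset)
qed

lemma H_2ec: assumes l1: "l \<ge> 1" shows "k_edge_connected 2 (H_verts l) (H_edges l)"
  unfolding k_edge_connected_def
proof (intro conjI allI impI)
  have "{(int l, 1), (- int l, 1)} \<subseteq> H_verts l" using root_verts by auto
  moreover have "card {(int l, 1), (- int l, 1 :: nat)} = 2" using l1 by simp
  ultimately show "2 \<le> card (H_verts l)" using fin_V by (metis card_mono)
next
  fix F assume F: "F \<subseteq> H_edges l \<and> card F < 2"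
  have fF: "finite F" using F fin_E[OF l1] finite_subset by blast
  have "card F = 0 \<or> card F = 1" using F by auto
  then have "F = {} \<or> (\<exists>e. F = {e})" using fF by (auto simp: card_1_singleton_iff)
  then show "connected_graph (H_verts l) (H_edges l - F)"
  proof
    assume "F = {}" then show ?thesis using conn_E by simp
  next
    assume "\<exists>e. F = {e}"
    then obtain e where e: "F = {e}" by blast
    then have eE: "e \<in> H_edges l" using F by auto
    obtain a b where ab: "e = {a,b}" "(a,b) \<in> (adj_rel (H_edges l - {e}))\<^sup>*" using cyc[OF l1 eE] by blast
    show ?thesis unfolding e connected_graph_def
    proof (intro conjI ballI)
      show "H_verts l \<noteq> {}" using root_verts(1)[of l] by (metis empty_iff)
      fix u v assume "u \<in> H_verts l" "v \<in> H_verts l"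
      then have "(u,v) \<in> (adj_rel (H_edges l))\<^sup>*" using conn_E unfolding connected_graph_def by blast
      then show "(u,v) \<in> (adj_rel (H_edges l - {e}))\<^sup>*" by (rule reroute[OF _ ab])
    qed
  qed
qed

lemma card3: assumes "a \<noteq> b" "a \<noteq> c" "b \<noteq> c" shows "card {{v,a},{v,b},{v,c}} = 3"
proof -
  have "{v,a} \<noteq> {v,b}" "{v,a} \<noteq> {v,c}" "{v,b} \<noteq> {v,c}" using assms by (auto simp: doubleton_eq_iff)
  then show ?thesis by simp
qed

lemma par_eq: fixes j j' c :: nat assumes "c = 2*j'-1 \<or> c = 2*j'" "1 \<le> j'" shows "j' = (c+1) div 2"
  using assms by presburger

lemma inc_top: assumes l1: "l \<ge> 1" and h: "1 \<le> h" and v: "(h,j) \<in> H_verts l"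
  shows "{e \<in> H_edges l. (h,j) \<in> e} = {{(h,j),(h-1,2*j-1)}, {(h,j),(h-1,2*j)},
      {(h,j), if h = int l then (- int l, 1) else (h+1,(j+1) div 2)}}" (is "?L = ?R")
proof
  have hv: "h \<le> int l" "1 \<le> j" "j \<le> 2 ^ nat (int l - h)" using v h by auto
  show "?L \<subseteq> ?R"
  proof
    fix e assume "e \<in> ?L"
    then have eE: "e \<in> H_edges l" and ve: "(h,j) \<in> e" by auto
    from eE[unfolded edge_iff] show "e \<in> ?R"
    proof (elim disjE exE conjE)
      fix h' j' c' assume e: "e = {(h', j'), (h' - 1, c')}" and t: "TEp l h' j' c'"
      have t': "1 \<le> h'" "h' \<le> int l" "1 \<le> j'" "c' = 2*j'-1 \<or> c' = 2*j'" using t unfolding TEp_def by auto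
      from ve e have "(h,j) = (h',j') \<or> (h,j) = (h'-1,c')" by auto
      then show ?thesis
      proof
        assume "(h,j) = (h',j')" then show ?thesis using e t' by auto
      next
        assume a: "(h,j) = (h'-1,c')"
        then have "h' = h + 1" "j = c'" by auto
        moreover have "j' = (j+1) div 2" using par_eq[OF t'(4,3)] a by simp
        ultimately show ?thesis using e t' by (auto simp: insert_commute)
      qed
    next
      fix h' j' c' assume e: "e = {(h', j'), (h' + 1, c')}" and t: "BEp l h' j' c'"
      have "h' \<le> -1" using t unfolding BEp_def by auto
      then show ?thesis using ve e h by auto
    next
      assume e: "e = {(int l, 1), (- int l, 1)}"
      then have "h = int l" "j = 1" using ve h by auto
      then show ?thesis using e by auto
    next
      fix j' assume e: "e = {(0, 2 * j' - 1), (0, 2 * j')}"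
      then show ?thesis using ve h by auto
    qed
  qed
  show "?R \<subseteq> ?L"
  proof -
    have "TEp l h j (2*j-1)" "TEp l h j (2*j)" unfolding TEp_def using h hv by auto
    then have 1: "{(h,j),(h-1,2*j-1)} \<in> H_edges l" "{(h,j),(h-1,2*j)} \<in> H_edges l" using TE_in by auto
    have 2: "{(h,j), if h = int l then (- int l, 1) else (h+1,(j+1) div 2)} \<in> H_edges l"
    proof (cases "h = int l")
      case True
      then have "j = 1" using hv by simp
      then show ?thesis using True root_in[of l] by simp
    next
      case False
      have pw: "(2::nat) ^ nat (int l - h) = 2 * 2 ^ nat (int l - (h+1))"
        using pow_nat_succ[of "int l - (h+1)"] False hv by (simp add: algebra_simps)
      have j2: "j \<le> 2 * 2 ^ nat (int l - (h+1))" using hv pw by simp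
      note pa = parent_arith[OF hv(2) j2]
      have "TEp l (h+1) ((j+1) div 2) j" unfolding TEp_def using pa h hv False by auto
      from TE_in[OF this] show ?thesis using False by (simp add: insert_commute)
    qed
    show ?thesis using 1 2 by auto
  qed
qed

lemma deg_top: assumes l1: "l \<ge> 1" and h: "1 \<le> h" and v: "(h,j) \<in> H_verts l"
  shows "degree (H_edges l) (h,j) = 3"
  unfolding degree_def inc_top[OF assms]
  by (rule card3) (use v in \<open>auto; presburger\<close>)+

lemma inc_bot: assumes l1: "l \<ge> 1" and h: "h \<le> -1" and v: "(h,j) \<in> H_verts l"
  shows "{e \<in> H_edges l. (h,j) \<in> e} = {{(h,j),(h+1,2*j-1)}, {(h,j),(h+1,2*j)},
      {(h,j), if h = - int l then (int l, 1) else (h-1,(j+1) div 2)}}" (is "?L = ?R")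
proof
  have hv: "- int l \<le> h" "1 \<le> j" "j \<le> 2 ^ nat (int l - \<bar>h\<bar>)" using v h by auto
  show "?L \<subseteq> ?R"
  proof
    fix e assume "e \<in> ?L"
    then have eE: "e \<in> H_edges l" and ve: "(h,j) \<in> e" by auto
    from eE[unfolded edge_iff] show "e \<in> ?R"
    proof (elim disjE exE conjE)
      fix h' j' c' assume e: "e = {(h', j'), (h' - 1, c')}" and t: "TEp l h' j' c'"
      have "1 \<le> h'" using t unfolding TEp_def by auto
      then show ?thesis using ve e h by auto
    next
      fix h' j' c' assume e: "e = {(h', j'), (h' + 1, c')}" and t: "BEp l h' j' c'"
      have t': "- int l \<le> h'" "h' \<le> -1" "1 \<le> j'" "c' = 2*j'-1 \<or> c' = 2*j'" using t unfolding BEp_def by auto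
      from ve e have "(h,j) = (h',j') \<or> (h,j) = (h'+1,c')" by auto
      then show ?thesis
      proof
        assume "(h,j) = (h',j')" then show ?thesis using e t' by auto
      next
        assume a: "(h,j) = (h'+1,c')"
        then have "h' = h - 1" "j = c'" by auto
        moreover have "j' = (j+1) div 2" using par_eq[OF t'(4,3)] a by simp
        ultimately show ?thesis using e t' by (auto simp: insert_commute)
      qed
    next
      assume e: "e = {(int l, 1), (- int l, 1)}"
      then have "h = - int l" "j = 1" using ve h by auto
      then show ?thesis using e by (auto simp: insert_commute)
    next
      fix j' assume e: "e = {(0, 2 * j' - 1), (0, 2 * j')}"
      then show ?thesis using ve h by auto
    qed
  qed
  show "?R \<subseteq> ?L"
  proof -
    have "BEp l h j (2*j-1)" "BEp l h j (2*j)" unfolding BEp_def using h hv by auto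
    then have 1: "{(h,j),(h+1,2*j-1)} \<in> H_edges l" "{(h,j),(h+1,2*j)} \<in> H_edges l" using BE_in by auto
    have 2: "{(h,j), if h = - int l then (int l, 1) else (h-1,(j+1) div 2)} \<in> H_edges l"
    proof (cases "h = - int l")
      case True
      then have "j = 1" using hv by simp
      then show ?thesis using True root_in[of l] by (simp add: insert_commute)
    next
      case False
      have ab: "\<bar>h\<bar> = - h" "\<bar>h - 1\<bar> = 1 - h" using h by auto
      have pw: "(2::nat) ^ nat (int l - \<bar>h\<bar>) = 2 * 2 ^ nat (int l - \<bar>h - 1\<bar>)"
        using pow_nat_succ[of "int l + h - 1"] False hv ab by (simp add: algebra_simps)
      have j2: "j \<le> 2 * 2 ^ nat (int l - \<bar>h - 1\<bar>)" using hv pw by simp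
      note pa = parent_arith[OF hv(2) j2]
      have "BEp l (h-1) ((j+1) div 2) j" unfolding BEp_def using pa h hv False by auto
      from BE_in[OF this] show ?thesis using False by (simp add: insert_commute)
    qed
    show ?thesis using 1 2 by auto
  qed
qed

lemma deg_bot: assumes l1: "l \<ge> 1" and h: "h \<le> -1" and v: "(h,j) \<in> H_verts l"
  shows "degree (H_edges l) (h,j) = 3"
  unfolding degree_def inc_bot[OF assms]
  by (rule card3) (use v in \<open>auto; presburger\<close>)+

lemma inc_mid: assumes l1: "l \<ge> 1" and v: "(0,j) \<in> H_verts l"
  shows "{e \<in> H_edges l. (0,j) \<in> e} = {{(0,j),(1,(j+1) div 2)}, {(0,j),(-1,(j+1) div 2)},
      {(0,j), (0, if odd j then j+1 else j-1)}}" (is "?L = ?R")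
proof
  have hv: "1 \<le> j" "j \<le> 2 ^ l" using v by auto
  have pw: "(2::nat) ^ l = 2 * 2 ^ (l - 1)" using pow_l1[OF l1] .
  have j2: "j \<le> 2 * 2 ^ (l-1)" using hv pw by simp
  note pa = parent_arith[OF hv(1) j2]
  have n1: "nat (int l - 1) = l - 1" using l1 by simp
  show "?L \<subseteq> ?R"
  proof
    fix e assume "e \<in> ?L"
    then have eE: "e \<in> H_edges l" and ve: "(0,j) \<in> e" by auto
    from eE[unfolded edge_iff] show "e \<in> ?R"
    proof (elim disjE exE conjE)
      fix h' j' c' assume e: "e = {(h', j'), (h' - 1, c')}" and t: "TEp l h' j' c'"
      have t': "1 \<le> h'" "1 \<le> j'" "c' = 2*j'-1 \<or> c' = 2*j'" using t unfolding TEp_def by auto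
      from ve e t' have a: "(0,j) = (h'-1,c')" by auto
      then have "h' = 1" "j = c'" by auto
      moreover have "j' = (j+1) div 2" using par_eq[OF t'(3,2)] a by simp
      ultimately show ?thesis using e by (auto simp: insert_commute)
    next
      fix h' j' c' assume e: "e = {(h', j'), (h' + 1, c')}" and t: "BEp l h' j' c'"
      have t': "h' \<le> -1" "1 \<le> j'" "c' = 2*j'-1 \<or> c' = 2*j'" using t unfolding BEp_def by auto
      from ve e t' have a: "(0,j) = (h'+1,c')" by auto
      then have "h' = -1" "j = c'" by auto
      moreover have "j' = (j+1) div 2" using par_eq[OF t'(3,2)] a by simp
      ultimately show ?thesis using e by (auto simp: insert_commute)
    next
      assume e: "e = {(int l, 1), (- int l, 1)}"
      then show ?thesis using ve l1 by auto
    next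
      fix j' assume e: "e = {(0, 2 * j' - 1), (0, 2 * j')}" and t: "PEp l j'"
      have j1: "1 \<le> j'" using t unfolding PEp_def by auto
      have "j = 2*j'-1 \<or> j = 2*j'" using ve e by auto
      then show ?thesis
      proof
        assume "j = 2*j'-1"
        then have "odd j" "j + 1 = 2*j'" using j1 by presburger+
        then show ?thesis using e \<open>j = 2*j'-1\<close> by auto
      next
        assume "j = 2*j'"
        then have "\<not> odd j" "j - 1 = 2*j'-1" using j1 by presburger+
        then show ?thesis using e \<open>j = 2*j'\<close> by (auto simp: insert_commute)
      qed
    qed
  qed
  show "?R \<subseteq> ?L"
  proof -
    have "TEp l 1 ((j+1) div 2) j" unfolding TEp_def using pa hv l1 n1 by auto
    from TE_in[OF this] have 1: "{(0,j),(1,(j+1) div 2)} \<in> H_edges l" by (simp add: insert_commute)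
    have "BEp l (-1) ((j+1) div 2) j" unfolding BEp_def using pa hv l1 n1 by auto
    from BE_in[OF this] have 2: "{(0,j),(-1,(j+1) div 2)} \<in> H_edges l" by (simp add: insert_commute)
    have p: "PEp l ((j+1) div 2)" unfolding PEp_def using pa by auto
    have 3: "{(0,j), (0, if odd j then j+1 else j-1)} \<in> H_edges l"
    proof (cases "odd j")
      case True
      then have "2 * ((j+1) div 2) - 1 = j" "2 * ((j+1) div 2) = j + 1" by presburger+
      then show ?thesis using PE_in[OF p] True by simp
    next
      case False
      then have "2 * ((j+1) div 2) - 1 = j - 1" "2 * ((j+1) div 2) = j" using hv by presburger+
      then show ?thesis using PE_in[OF p] False by (simp add: insert_commute)
    qed
    show ?thesis using 1 2 3 by auto
  qed
qed

lemma deg_mid: assumes l1: "l \<ge> 1" and v: "(0,j) \<in> H_verts l"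
  shows "degree (H_edges l) (0,j) = 3"
  unfolding degree_def inc_mid[OF assms]
  by (rule card3) auto

lemma H_regular: assumes l1: "l \<ge> 1" shows "regular 3 (H_verts l) (H_edges l)"
  unfolding regular_def
proof
  fix v assume v: "v \<in> H_verts l"
  obtain h j where hj: "v = (h,j)" by force
  have "h \<ge> 1 \<or> h \<le> -1 \<or> h = 0" by auto
  then show "degree (H_edges l) v = 3"
    using deg_top[OF l1, of h j] deg_bot[OF l1, of h j] deg_mid[OF l1, of j] v hj by auto
qed

lemma V_Sigma: "H_verts l = Sigma {- int l..int l} (\<lambda>h. {1..2 ^ nat (int l - \<bar>h\<bar>)})"
  unfolding H_verts_def by auto

lemma sum_levels: "n \<le> m \<Longrightarrow> (\<Sum>h\<in>{- int n..int n}. (2::nat) ^ nat (int m - \<bar>h\<bar>)) + 2 ^ (m - n + 1) = 3 * 2 ^ m"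
proof (induction n)
  case 0 then show ?case by simp
next
  case (Suc n)
  have I: "{- int (Suc n)..int (Suc n)} = insert (- int n - 1) (insert (int n + 1) {- int n..int n})" by auto
  have f: "(\<Sum>h\<in>{- int (Suc n)..int (Suc n)}. (2::nat) ^ nat (int m - \<bar>h\<bar>)) =
      2 ^ nat (int m - \<bar>- int n - 1\<bar>) + 2 ^ nat (int m - \<bar>int n + 1\<bar>) + (\<Sum>h\<in>{- int n..int n}. (2::nat) ^ nat (int m - \<bar>h\<bar>))"
    unfolding I by simp
  have e1: "nat (int m - \<bar>- int n - 1\<bar>) = m - n - 1" "nat (int m - \<bar>int n + 1\<bar>) = m - n - 1" using Suc.prems by auto
  have e2: "m - n + 1 = Suc (m - n - 1) + 1" "m - Suc n + 1 = Suc (m - n - 1)" using Suc.prems by auto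
  have "(2::nat) ^ (m - n + 1) = 2 ^ (m - n - 1) + 2 ^ (m - n - 1) + 2 ^ (m - Suc n + 1)"
    unfolding e2 by simp
  then show ?case using f e1 Suc.IH Suc.prems by simp
qed

lemma H_card: assumes "l \<ge> 1" shows "card (H_verts l) = 2 ^ (l + 1) + 2 ^ l - 2"
proof -
  have "card (H_verts l) = (\<Sum>h\<in>{- int l..int l}. (2::nat) ^ nat (int l - \<bar>h\<bar>))"
    unfolding V_Sigma by (subst card_SigmaI) auto
  moreover have "(\<Sum>h\<in>{- int l..int l}. (2::nat) ^ nat (int l - \<bar>h\<bar>)) + 2 = 3 * 2 ^ l"
    using sum_levels[of l l] by simp
  ultimately show ?thesis by simp
qed

theorem lemma1:
  fixes l :: nat
  assumes "l \<ge> 1"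
  shows "regular 3 (H_verts l) (H_edges l)
       \<and> planar (H_verts l) (H_edges l)
       \<and> k_edge_connected 2 (H_verts l) (H_edges l)
       \<and> card (H_verts l) = 2 ^ (l + 1) + 2 ^ l - 2"
  using H_regular[OF assms] H_planar[OF assms] H_2ec[OF assms] H_card[OF assms] by blast

end
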